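(* Let $1\le p<\infty$ and let $\mathbf u,\mathbf v$ be bounded sequences of non-zero scalars such that $\sum_{n=1}^\infty\frac{1}{|u_1\cdots u_n|^p}<\infty$ and $\sum_{n=1}^\infty\frac1{|v_1\cdots v_n|^p}<\infty$. Consider the weighted backward shifts $B_{\mathbf u},B_{\mathbf v}$ on $\ell_p(\mathbb Z_+)$. The following are equivalent: (1) $B_{\mathbf u}$ and $B_{\mathbf v}$ share a non-zero periodic point, i.e. there is $x\ne0$ and $d_1,d_2\in\mathbb N$ with $B_{\mathbf u}^{d_1}x=x=B_{\mathbf v}^{d_2}x$; (2) there exist $d\in\mathbb N$ and $0\le j\le d-1$ such that $u_{1+j}\cdots u_{dm+j}=v_{1+j}\cdots v_{dm+j}$ for all $m\ge1$; (3) there exist $d\in\mathbb N$, $0\le j\le d-1$ and a non-zero scalar $C$ such that $u_1\cdots u_{dm+j}=C\,v_1\cdots v_{dm+j}$ for all $m\ge0$ (an empty product being equal to $1$).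
   Context: $(e_n)_{n\ge0}$ is the canonical basis of $\ell_p(\mathbb Z_+)$ (real or complex), and $B_{\mathbf w}e_0=0$, $B_{\mathbf w}e_n=w_ne_{n-1}$ for $n\ge1$. *)

theory Defs
  imports "HOL-Analysis.Analysis"
begin

definition in_lp :: "real \<Rightarrow> (nat \<Rightarrow> 'a::real_normed_vector) \<Rightarrow> bool" where
  "in_lp p x \<longleftrightarrow> summable (\<lambda>n. norm (x n) powr p)"

text \<open>Weighted backward shift: (B_w x)_n = w_(n+1) x_(n+1); so B_w e_0 = 0, B_w e_n = w_n e_(n-1).
  Weights are indexed from 1; w 0 is irrelevant.\<close>
definition bws :: "(nat \<Rightarrow> 'a::real_normed_field) \<Rightarrow> (nat \<Rightarrow> 'a) \<Rightarrow> (nat \<Rightarrow> 'a)" where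
  "bws w x = (\<lambda>n. w (Suc n) * x (Suc n))"

end

theory Submission
  imports Defs
begin

lemma prod_split_gen:
  fixes w :: "nat \<Rightarrow> 'a::comm_monoid_mult"
  assumes "a \<le> Suc j" "j \<le> n"
  shows "(\<Prod>k\<in>{a..n}. w k) = (\<Prod>k\<in>{a..j}. w k) * (\<Prod>k\<in>{Suc j..n}. w k)"
proof -
  have "(\<Prod>k\<in>{a..j + (n-j)}. w k) = (\<Prod>k\<in>{a..j}. w k) * (\<Prod>k\<in>{j+1..j + (n-j)}. w k)"
    using assms by (intro prod.ub_add_nat) simp
  then show ?thesis using assms by simp
qed

lemma bws_iter:
  "(bws w ^^ k) x n = (\<Prod>i\<in>{Suc n..n+k}. w i) * x (n+k)"
proof (induction k arbitrary: n)
  case 0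
  then show ?case by simp
next
  case (Suc k)
  have "(bws w ^^ Suc k) x n = w (Suc n) * (bws w ^^ k) x (Suc n)"
    by (simp add: bws_def)
  also have "\<dots> = w (Suc n) * ((\<Prod>i\<in>{Suc (Suc n)..Suc n+k}. w i) * x (Suc n+k))"
    using Suc by simp
  also have "\<dots> = (\<Prod>i\<in>{Suc n..n+Suc k}. w i) * x (n+Suc k)"
    by (simp add: prod.atLeast_Suc_atMost mult.assoc)
  finally show ?case .
qed

lemma funpow_fix: "g x = x \<Longrightarrow> (g ^^ n) x = x"
  by (induction n) auto

lemma periodic_prod:
  assumes "(bws w ^^ d) x = x"
  shows "x j = (\<Prod>i\<in>{Suc j..j+d*m}. w i) * x (j+d*m)"
proof -
  have "((bws w ^^ d) ^^ m) x = x" using assms by (rule funpow_fix)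
  hence "(bws w ^^ (d*m)) x = x" by (simp add: funpow_mult)
  hence "x j = (bws w ^^ (d*m)) x j" by simp
  then show ?thesis by (simp add: bws_iter)
qed

definition pvec :: "(nat \<Rightarrow> 'a::real_normed_field) \<Rightarrow> nat \<Rightarrow> nat \<Rightarrow> nat \<Rightarrow> 'a" where
  "pvec w d j = (\<lambda>n. if n mod d = j then 1 / (\<Prod>k\<in>{Suc j..n}. w k) else 0)"

lemma pvec_fix:
  assumes wnz: "\<forall>n\<ge>1. w n \<noteq> 0" and d: "d \<ge> 1" and j: "j < d"
  shows "(bws w ^^ d) (pvec w d j) = pvec w d j"
proof
  fix n
  show "(bws w ^^ d) (pvec w d j) n = pvec w d j n"
  proof (cases "n mod d = j")
    case True
    hence jn: "j \<le> n" by (metis mod_less_eq_dividend)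
    have m: "(n+d) mod d = j" using True by simp
    have nz: "(\<Prod>k\<in>{Suc n..n+d}. w k) \<noteq> 0" using wnz by (simp add: prod_zero_iff)
    have sp: "(\<Prod>k\<in>{Suc j..n+d}. w k) = (\<Prod>k\<in>{Suc j..n}. w k) * (\<Prod>k\<in>{Suc n..n+d}. w k)"
      using jn by (intro prod_split_gen) auto
    show ?thesis using True m nz by (simp add: bws_iter pvec_def sp)
  next
    case False
    have "(n+d) mod d \<noteq> j" using False by simp
    then show ?thesis using False by (simp add: bws_iter pvec_def)
  qed
qed

lemma pvec_lp:
  fixes w :: "nat \<Rightarrow> 'a::real_normed_field"
  assumes wnz: "\<forall>n\<ge>1. w n \<noteq> 0" and d: "d \<ge> 1" and j: "j < d"
    and ws: "summable (\<lambda>n. 1 / norm (\<Prod>k\<in>{1..Suc n}. w k) powr p)"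
  shows "in_lp p (pvec w d j)"
proof -
  define K where "K = norm (\<Prod>k\<in>{1..j}. w k) powr p"
  have le: "norm (norm (pvec w d j (Suc n)) powr p) \<le> K * (1 / norm (\<Prod>k\<in>{1..Suc n}. w k) powr p)" for n
  proof (cases "Suc n mod d = j")
    case True
    hence jn: "j \<le> Suc n" by (metis mod_less_eq_dividend)
    have sp: "(\<Prod>k\<in>{1..Suc n}. w k) = (\<Prod>k\<in>{1..j}. w k) * (\<Prod>k\<in>{Suc j..Suc n}. w k)"
      using jn by (intro prod_split_gen) auto
    have nz: "(\<Prod>k\<in>{1..j}. w k) \<noteq> 0" using wnz by (simp add: prod_zero_iff)
    have "pvec w d j (Suc n) = 1 / (\<Prod>k\<in>{Suc j..Suc n}. w k)"
      using True by (simp add: pvec_def)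
    also have "\<dots> = (\<Prod>k\<in>{1..j}. w k) / ((\<Prod>k\<in>{1..j}. w k) * (\<Prod>k\<in>{Suc j..Suc n}. w k))"
      using nz by simp
    also have "\<dots> = (\<Prod>k\<in>{1..j}. w k) / (\<Prod>k\<in>{1..Suc n}. w k)"
      by (simp only: sp)
    finally have "pvec w d j (Suc n) = (\<Prod>k\<in>{1..j}. w k) / (\<Prod>k\<in>{1..Suc n}. w k)" .
    hence "norm (pvec w d j (Suc n)) powr p = K * (1 / norm (\<Prod>k\<in>{1..Suc n}. w k) powr p)"
      by (simp add: K_def norm_divide powr_divide)
    then show ?thesis by (simp add: K_def)
  next
    case False
    then show ?thesis by (simp add: pvec_def K_def)
  qed
  have "summable (\<lambda>n. norm (pvec w d j (Suc n)) powr p)"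
    by (rule summable_comparison_test[OF _ summable_mult[OF ws]]) (use le in auto)
  then show ?thesis unfolding in_lp_def by (subst summable_Suc_iff[symmetric])
qed

lemma prod_nz:
  fixes a b :: nat
  assumes "\<forall>n\<ge>1. w n \<noteq> (0::'a::real_normed_field)" "a \<ge> 1"
  shows "(\<Prod>k\<in>{a..b}. w k) \<noteq> 0"
proof -
  have "\<forall>k\<in>{a..b}. w k \<noteq> 0"
  proof
    fix k assume "k \<in> {a..b}"
    hence "k \<ge> 1" using assms(2) by auto
    thus "w k \<noteq> 0" using assms(1) by blast
  qed
  then show ?thesis by (simp add: prod_zero_iff)
qed

lemma one_to_two:
  fixes u v :: "nat \<Rightarrow> 'a::real_normed_field"
  assumes x0: "x \<noteq> (\<lambda>n. 0)" and d1: "d1 \<ge> 1" and d2: "d2 \<ge> 1"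
    and fu: "(bws u ^^ d1) x = x" and fv: "(bws v ^^ d2) x = x"
    and unz: "\<forall>n\<ge>1. u n \<noteq> 0"
  shows "\<exists>d\<ge>1. \<exists>j<d. \<forall>m\<ge>1.
              (\<Prod>k\<in>{1+j..d*m+j}. u k) = (\<Prod>k\<in>{1+j..d*m+j}. v k)"
proof -
  define d where "d = d1 * d2"
  have d: "d \<ge> 1" using d1 d2 by (simp add: d_def)
  have gu: "(bws u ^^ d) x = x"
  proof -
    have "((bws u ^^ d1) ^^ d2) x = x" using fu by (rule funpow_fix)
    thus ?thesis by (simp add: funpow_mult d_def)
  qed
  have gv: "(bws v ^^ d) x = x"
  proof -
    have "((bws v ^^ d2) ^^ d1) x = x" using fv by (rule funpow_fix)
    thus ?thesis by (simp add: funpow_mult d_def mult.commute)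
  qed
  obtain n where xn: "x n \<noteq> 0" using x0 by auto
  define j where "j = n mod d"
  define q where "q = n div d"
  have nq: "n = j + d*q" by (simp add: j_def q_def)
  have jd: "j < d" using d by (simp add: j_def)
  have "x j = (\<Prod>i\<in>{Suc j..j+d*q}. u i) * x (j+d*q)" by (rule periodic_prod[OF gu])
  hence xj: "x j \<noteq> 0" using xn nq prod_nz[OF unz, of "Suc j" "j+d*q"] by simp
  have "\<forall>m\<ge>1. (\<Prod>k\<in>{1+j..d*m+j}. u k) = (\<Prod>k\<in>{1+j..d*m+j}. v k)"
  proof (intro allI impI)
    fix m :: nat assume "m \<ge> 1"
    have a: "x j = (\<Prod>i\<in>{Suc j..j+d*m}. u i) * x (j+d*m)" by (rule periodic_prod[OF gu])
    have b: "x j = (\<Prod>i\<in>{Suc j..j+d*m}. v i) * x (j+d*m)" by (rule periodic_prod[OF gv])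
    have "x (j+d*m) \<noteq> 0" using a xj by auto
    hence "(\<Prod>i\<in>{Suc j..j+d*m}. u i) = (\<Prod>i\<in>{Suc j..j+d*m}. v i)" using a b by simp
    thus "(\<Prod>k\<in>{1+j..d*m+j}. u k) = (\<Prod>k\<in>{1+j..d*m+j}. v k)" by (simp add: add.commute)
  qed
  then show ?thesis using d jd by blast
qed

lemma two_to_one:
  fixes u v :: "nat \<Rightarrow> 'a::real_normed_field"
  assumes unz: "\<forall>n\<ge>1. u n \<noteq> 0" and vnz: "\<forall>n\<ge>1. v n \<noteq> 0"
    and us: "summable (\<lambda>n. 1 / norm (\<Prod>k\<in>{1..Suc n}. u k) powr p)"
    and d: "d \<ge> 1" and jd: "j < d"
    and h: "\<forall>m\<ge>1. (\<Prod>k\<in>{1+j..d*m+j}. u k) = (\<Prod>k\<in>{1+j..d*m+j}. v k)"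
  shows "\<exists>x. in_lp p x \<and> x \<noteq> (\<lambda>n. 0) \<and> (\<exists>d1 d2. d1 \<ge> 1 \<and> d2 \<ge> 1 \<and>
              (bws u ^^ d1) x = x \<and> (bws v ^^ d2) x = x)"
proof -
  have eq: "pvec u d j = pvec v d j"
  proof
    fix n
    show "pvec u d j n = pvec v d j n"
    proof (cases "n mod d = j")
      case True
      define m where "m = n div d"
      have n: "n = d*m + j" using True mult_div_mod_eq[of d n] unfolding m_def by simp
      show ?thesis
      proof (cases "m = 0")
        case True
        then show ?thesis using n by (simp add: pvec_def)
      next
        case False
        hence "(\<Prod>k\<in>{1+j..d*m+j}. u k) = (\<Prod>k\<in>{1+j..d*m+j}. v k)" using h by simp
        then show ?thesis using n by (simp add: pvec_def)
      qed
    next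
      case False
      then show ?thesis by (simp add: pvec_def)
    qed
  qed
  have "pvec u d j j = 1" using jd by (simp add: pvec_def)
  hence "pvec u d j \<noteq> (\<lambda>n. 0)" by (metis zero_neq_one)
  moreover have "in_lp p (pvec u d j)" by (rule pvec_lp[OF unz d jd us])
  moreover have "(bws u ^^ d) (pvec u d j) = pvec u d j" by (rule pvec_fix[OF unz d jd])
  moreover have "(bws v ^^ d) (pvec u d j) = pvec u d j" unfolding eq by (rule pvec_fix[OF vnz d jd])
  ultimately show ?thesis using d by blast
qed

lemma two_iff_three:
  fixes u v :: "nat \<Rightarrow> 'a::real_normed_field"
  assumes unz: "\<forall>n\<ge>1. u n \<noteq> 0" and vnz: "\<forall>n\<ge>1. v n \<noteq> 0"
  shows "(\<exists>d\<ge>1. \<exists>j<d. \<forall>m\<ge>1.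
              (\<Prod>k\<in>{1+j..d*m+j}. u k) = (\<Prod>k\<in>{1+j..d*m+j}. v k))
         \<longleftrightarrow> (\<exists>d\<ge>1. \<exists>j<d. \<exists>C. C \<noteq> 0 \<and> (\<forall>m.
              (\<Prod>k\<in>{1..d*m+j}. u k) = C * (\<Prod>k\<in>{1..d*m+j}. v k)))"
proof
  assume "\<exists>d\<ge>1. \<exists>j<d. \<forall>m\<ge>1.
              (\<Prod>k\<in>{1+j..d*m+j}. u k) = (\<Prod>k\<in>{1+j..d*m+j}. v k)"
  then obtain d j where d: "d \<ge> 1" and jd: "j < d" and h: "\<forall>m\<ge>1.
              (\<Prod>k\<in>{1+j..d*m+j}. u k) = (\<Prod>k\<in>{1+j..d*m+j}. v k)" by blast
  define C where "C = (\<Prod>k\<in>{1..j}. u k) / (\<Prod>k\<in>{1..j}. v k)"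
  have nu: "(\<Prod>k\<in>{1..j}. u k) \<noteq> 0" by (rule prod_nz[OF unz]) simp
  have nv: "(\<Prod>k\<in>{1..j}. v k) \<noteq> 0" by (rule prod_nz[OF vnz]) simp
  have C: "C \<noteq> 0" using nu nv by (simp add: C_def)
  have "(\<Prod>k\<in>{1..d*m+j}. u k) = C * (\<Prod>k\<in>{1..d*m+j}. v k)" for m
  proof (cases "m = 0")
    case True
    then show ?thesis using nv by (simp add: C_def)
  next
    case False
    have su: "(\<Prod>k\<in>{1..d*m+j}. u k) = (\<Prod>k\<in>{1..j}. u k) * (\<Prod>k\<in>{Suc j..d*m+j}. u k)"
      by (rule prod_split_gen) auto
    have sv: "(\<Prod>k\<in>{1..d*m+j}. v k) = (\<Prod>k\<in>{1..j}. v k) * (\<Prod>k\<in>{Suc j..d*m+j}. v k)"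
      by (rule prod_split_gen) auto
    have "(\<Prod>k\<in>{Suc j..d*m+j}. u k) = (\<Prod>k\<in>{Suc j..d*m+j}. v k)" using h False by simp
    then show ?thesis using nv by (simp only: su sv C_def) simp
  qed
  then show "\<exists>d\<ge>1. \<exists>j<d. \<exists>C. C \<noteq> 0 \<and> (\<forall>m.
              (\<Prod>k\<in>{1..d*m+j}. u k) = C * (\<Prod>k\<in>{1..d*m+j}. v k))" using d jd C by blast
next
  assume "\<exists>d\<ge>1. \<exists>j<d. \<exists>C. C \<noteq> 0 \<and> (\<forall>m.
              (\<Prod>k\<in>{1..d*m+j}. u k) = C * (\<Prod>k\<in>{1..d*m+j}. v k))"
  then obtain d j C where d: "d \<ge> 1" and jd: "j < d" and C: "C \<noteq> 0" and h: "\<forall>m.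
              (\<Prod>k\<in>{1..d*m+j}. u k) = C * (\<Prod>k\<in>{1..d*m+j}. v k)" by blast
  have nv: "(\<Prod>k\<in>{1..j}. v k) \<noteq> 0" by (rule prod_nz[OF vnz]) simp
  have h0: "(\<Prod>k\<in>{1..j}. u k) = C * (\<Prod>k\<in>{1..j}. v k)" using h[rule_format, of 0] by simp
  have "(\<Prod>k\<in>{1+j..d*m+j}. u k) = (\<Prod>k\<in>{1+j..d*m+j}. v k)" if "m \<ge> 1" for m
  proof -
    have su: "(\<Prod>k\<in>{1..d*m+j}. u k) = (\<Prod>k\<in>{1..j}. u k) * (\<Prod>k\<in>{Suc j..d*m+j}. u k)"
      by (rule prod_split_gen) auto
    have sv: "(\<Prod>k\<in>{1..d*m+j}. v k) = (\<Prod>k\<in>{1..j}. v k) * (\<Prod>k\<in>{Suc j..d*m+j}. v k)"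
      by (rule prod_split_gen) auto
    have "(C * (\<Prod>k\<in>{1..j}. v k)) * (\<Prod>k\<in>{Suc j..d*m+j}. u k) = (C * (\<Prod>k\<in>{1..j}. v k)) * (\<Prod>k\<in>{Suc j..d*m+j}. v k)"
      using h[rule_format, of m] unfolding su sv h0 by (simp add: ac_simps)
    hence "(\<Prod>k\<in>{Suc j..d*m+j}. u k) = (\<Prod>k\<in>{Suc j..d*m+j}. v k)" using C nv by simp
    thus ?thesis by simp
  qed
  then show "\<exists>d\<ge>1. \<exists>j<d. \<forall>m\<ge>1.
              (\<Prod>k\<in>{1+j..d*m+j}. u k) = (\<Prod>k\<in>{1+j..d*m+j}. v k)" using d jd by blast
qed

theorem theorem4p2:
  fixes p :: real and u v :: "nat \<Rightarrow> 'a::real_normed_field"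
  assumes hp: "1 \<le> p"
    and ub: "bounded (u ` {1..})" and vb: "bounded (v ` {1..})"
    and unz: "\<forall>n\<ge>1. u n \<noteq> 0" and vnz: "\<forall>n\<ge>1. v n \<noteq> 0"
    and us: "summable (\<lambda>n. 1 / norm (\<Prod>k\<in>{1..Suc n}. u k) powr p)"
    and vs: "summable (\<lambda>n. 1 / norm (\<Prod>k\<in>{1..Suc n}. v k) powr p)"
  shows "((\<exists>x. in_lp p x \<and> x \<noteq> (\<lambda>n. 0) \<and> (\<exists>d1 d2. d1 \<ge> 1 \<and> d2 \<ge> 1 \<and>
              (bws u ^^ d1) x = x \<and> (bws v ^^ d2) x = x))
         \<longleftrightarrow> (\<exists>d\<ge>1. \<exists>j<d. \<forall>m\<ge>1.
              (\<Prod>k\<in>{1+j..d*m+j}. u k) = (\<Prod>k\<in>{1+j..d*m+j}. v k)))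
       \<and> ((\<exists>d\<ge>1. \<exists>j<d. \<forall>m\<ge>1.
              (\<Prod>k\<in>{1+j..d*m+j}. u k) = (\<Prod>k\<in>{1+j..d*m+j}. v k))
         \<longleftrightarrow> (\<exists>d\<ge>1. \<exists>j<d. \<exists>C. C \<noteq> 0 \<and> (\<forall>m.
              (\<Prod>k\<in>{1..d*m+j}. u k) = C * (\<Prod>k\<in>{1..d*m+j}. v k))))"
proof (rule conjI)
  show "((\<exists>x. in_lp p x \<and> x \<noteq> (\<lambda>n. 0) \<and> (\<exists>d1 d2. d1 \<ge> 1 \<and> d2 \<ge> 1 \<and>
              (bws u ^^ d1) x = x \<and> (bws v ^^ d2) x = x))
         \<longleftrightarrow> (\<exists>d\<ge>1. \<exists>j<d. \<forall>m\<ge>1.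
              (\<Prod>k\<in>{1+j..d*m+j}. u k) = (\<Prod>k\<in>{1+j..d*m+j}. v k)))"
  proof
    assume "\<exists>x. in_lp p x \<and> x \<noteq> (\<lambda>n. 0) \<and> (\<exists>d1 d2. d1 \<ge> 1 \<and> d2 \<ge> 1 \<and>
              (bws u ^^ d1) x = x \<and> (bws v ^^ d2) x = x)"
    then obtain x d1 d2 where "x \<noteq> (\<lambda>n. 0)" "d1 \<ge> 1" "d2 \<ge> 1"
      "(bws u ^^ d1) x = x" "(bws v ^^ d2) x = x" by blast
    then show "\<exists>d\<ge>1. \<exists>j<d. \<forall>m\<ge>1.
              (\<Prod>k\<in>{1+j..d*m+j}. u k) = (\<Prod>k\<in>{1+j..d*m+j}. v k)"
      using one_to_two unz by blast
  next
    assume "\<exists>d\<ge>1. \<exists>j<d. \<forall>m\<ge>1.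
              (\<Prod>k\<in>{1+j..d*m+j}. u k) = (\<Prod>k\<in>{1+j..d*m+j}. v k)"
    then obtain d j where "d \<ge> 1" "j < d" "\<forall>m\<ge>1.
              (\<Prod>k\<in>{1+j..d*m+j}. u k) = (\<Prod>k\<in>{1+j..d*m+j}. v k)" by blast
    then show "\<exists>x. in_lp p x \<and> x \<noteq> (\<lambda>n. 0) \<and> (\<exists>d1 d2. d1 \<ge> 1 \<and> d2 \<ge> 1 \<and>
              (bws u ^^ d1) x = x \<and> (bws v ^^ d2) x = x)"
      by (rule two_to_one[OF unz vnz us])
  qed
  show "(\<exists>d\<ge>1. \<exists>j<d. \<forall>m\<ge>1.
              (\<Prod>k\<in>{1+j..d*m+j}. u k) = (\<Prod>k\<in>{1+j..d*m+j}. v k))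
         \<longleftrightarrow> (\<exists>d\<ge>1. \<exists>j<d. \<exists>C. C \<noteq> 0 \<and> (\<forall>m.
              (\<Prod>k\<in>{1..d*m+j}. u k) = C * (\<Prod>k\<in>{1..d*m+j}. v k)))"
    by (rule two_iff_three[OF unz vnz])
qed

end
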